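(* Let $\mathbf{P}$ be a $g$-regular $(K,F,Z,S)$ PDA with $g=KZ/F+1\ge 2$. Then $F\ge\binom{K}{KZ/F}$.
   Context: For positive integers $K,F,Z,S$ and an integer $g$, an $F\times K$ array $\mathbf{P}=[p_{j,k}]$ whose entries are either a special symbol $*$ or one of the integers $0,1,\dots,S-1$ is a $g$-regular $(K,F,Z,S)$ PDA if: (C1) the symbol $*$ appears exactly $Z$ times in each column; (C2') each integer in $\{0,\dots,S-1\}$ appears exactly $g$ times in $\mathbf{P}$; (C3) for any two distinct entries with $p_{j_1,k_1}=p_{j_2,k_2}=s$ an integer, we have $j_1\neq j_2$, $k_1\neq k_2$, and $p_{j_1,k_2}=p_{j_2,k_1}=*$. *)

theory Defs
  imports Complex_Main
begin

text \<open>An F x K array is a function P :: nat => nat => nat option, where P j k is the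
entry in row j < F and column k < K; None encodes the special symbol *, and
Some s encodes the integer s.\<close>

definition g_regular_PDA ::
  "nat \<Rightarrow> nat \<Rightarrow> nat \<Rightarrow> nat \<Rightarrow> int \<Rightarrow> (nat \<Rightarrow> nat \<Rightarrow> nat option) \<Rightarrow> bool" where
  "g_regular_PDA K F Z S g P \<longleftrightarrow>
     K > 0 \<and> F > 0 \<and> Z > 0 \<and> S > 0 \<and>
     (\<forall>j<F. \<forall>k<K. \<forall>s. P j k = Some s \<longrightarrow> s < S) \<and>
     (\<forall>k<K. card {j. j < F \<and> P j k = None} = Z) \<and>
     (\<forall>s<S. int (card {(j, k). j < F \<and> k < K \<and> P j k = Some s}) = g) \<and>
     (\<forall>j1 k1 j2 k2 s. j1 < F \<and> k1 < K \<and> j2 < F \<and> k2 < K \<and>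
        (j1, k1) \<noteq> (j2, k2) \<and> P j1 k1 = Some s \<and> P j2 k2 = Some s \<longrightarrow>
        j1 \<noteq> j2 \<and> k1 \<noteq> k2 \<and> P j1 k2 = None \<and> P j2 k1 = None)"

end

theory Submission
  imports Defs
begin

lemma card_filter_sum:
  "card {k. k < (K::nat) \<and> Q k} = (\<Sum>k<K. if Q k then 1 else (0::nat))"
proof -
  have "{k. k < K \<and> Q k} = {k\<in>{..<K}. Q k}" by auto
  then show ?thesis
    using sum.inter_filter[of "{..<K}" "\<lambda>_. (1::nat)" Q] by simp
qed

theorem theorem3:
  fixes K F Z S :: nat and g :: int and P :: "nat \<Rightarrow> nat \<Rightarrow> nat option"
  assumes "g_regular_PDA K F Z S g P"
    and "real_of_int g = real K * real Z / real F + 1"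
    and "g \<ge> 2"
  shows "F \<ge> K choose (K * Z div F)"
proof -
  note D = assms(1)[unfolded g_regular_PDA_def]
  have Fpos: "F > 0" using D by auto
  have bnd: "\<And>j k s. j < F \<Longrightarrow> k < K \<Longrightarrow> P j k = Some s \<Longrightarrow> s < S" using D by blast
  have colZ: "\<And>k. k < K \<Longrightarrow> card {j. j < F \<and> P j k = None} = Z" using D by blast
  have occ: "\<And>s. s < S \<Longrightarrow> int (card {(j, k). j < F \<and> k < K \<and> P j k = Some s}) = g"
    using D by blast
  have C3: "\<And>j1 k1 j2 k2 s. j1 < F \<Longrightarrow> k1 < K \<Longrightarrow> j2 < F \<Longrightarrow> k2 < K \<Longrightarrow>
        (j1, k1) \<noteq> (j2, k2) \<Longrightarrow> P j1 k1 = Some s \<Longrightarrow> P j2 k2 = Some s \<Longrightarrow>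
        j1 \<noteq> j2 \<and> k1 \<noteq> k2 \<and> P j1 k2 = None \<and> P j2 k1 = None"
    using D by blast
  define t where "t = nat (g - 1)"
  have gt: "g = int t + 1" using assms(3) t_def by simp
  have "real t = real K * real Z / real F" using assms(2) gt by simp
  then have "real t * real F = real K * real Z" using Fpos by (simp add: field_simps)
  then have tF: "t * F = K * Z" by (metis of_nat_eq_iff of_nat_mult)
  have tdiv: "K * Z div F = t" using tF Fpos by (metis nonzero_mult_div_cancel_right less_not_refl2)
  have KZpos: "K > 0" using D by auto
  have ZF: "Z \<le> F"
  proof -
    have "card {j. j < F \<and> P j 0 = None} \<le> card {..<F}" by (rule card_mono) auto
    then show ?thesis using colZ[OF KZpos] by simp
  qed
  have tK: "t \<le> K"
  proof -
    have "t * F \<le> K * F" using tF ZF by simp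
    then show ?thesis using Fpos by simp
  qed
  define star where "star j = {k. k < K \<and> P j k = None}" for j
  have star_sub: "star j \<subseteq> {..<K}" for j unfolding star_def by auto
  have star_fin: "finite (star j)" for j using star_sub finite_subset by blast
  define Occ where "Occ s = {(j, k). j < F \<and> k < K \<and> P j k = Some s}" for s
  have Ofin: "finite (Occ s)" for s
    by (rule finite_subset[of _ "{..<F} \<times> {..<K}"]) (auto simp: Occ_def)
  have key: "card (snd ` Occ s) = t + 1 \<and> k \<in> snd ` Occ s \<and> snd ` Occ s - {k} \<subseteq> star j"
    if jk: "j < F" "k < K" "P j k = Some s" for j k s
  proof -
    have sS: "s < S" using bnd jk by blast
    have cO: "card (Occ s) = t + 1" using occ[OF sS] gt unfolding Occ_def by simp
    have inj: "inj_on snd (Occ s)"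
    proof (rule inj_onI)
      fix a b assume a: "a \<in> Occ s" and b: "b \<in> Occ s" and e: "snd a = snd b"
      show "a = b"
      proof (rule ccontr)
        assume "a \<noteq> b"
        with a b e C3[of "fst a" "snd a" "fst b" "snd b" s] show False
          by (auto simp: Occ_def) blast
      qed
    qed
    have "(j, k) \<in> Occ s" using jk by (simp add: Occ_def)
    then have kin: "k \<in> snd ` Occ s" by force
    have sub: "snd ` Occ s - {k} \<subseteq> star j"
    proof
      fix k2 assume "k2 \<in> snd ` Occ s - {k}"
      then obtain j2 where j2: "(j2, k2) \<in> Occ s" "k2 \<noteq> k" by force
      then have "j2 < F" "k2 < K" "P j2 k2 = Some s" by (auto simp: Occ_def)
      with C3[of j k j2 k2 s] jk j2 have "P j k2 = None" by auto
      then show "k2 \<in> star j" using \<open>k2 < K\<close> by (simp add: star_def)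
    qed
    show ?thesis using card_image[OF inj] cO kin sub by simp
  qed
  have ge: "card (star j) \<ge> t" if "j < F" for j
  proof (cases "\<exists>k<K. P j k \<noteq> None")
    case True
    then obtain k s where jk: "k < K" "P j k = Some s" by auto
    from key[OF that jk] have "card (snd ` Occ s) = t + 1" "k \<in> snd ` Occ s" "snd ` Occ s - {k} \<subseteq> star j"
      by auto
    moreover have "finite (snd ` Occ s)" using Ofin by simp
    ultimately have "card (snd ` Occ s - {k}) = t" by simp
    then show ?thesis using card_mono[OF star_fin \<open>snd ` Occ s - {k} \<subseteq> star j\<close>] by simp
  next
    case False
    then have "star j = {..<K}" unfolding star_def by auto
    then show ?thesis using tK by simp
  qed
  have sumstar: "(\<Sum>j<F. card (star j)) = K * Z"
  proof -
    have "(\<Sum>j<F. card (star j)) = (\<Sum>j<F. \<Sum>k<K. if P j k = None then 1 else (0::nat))"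
      unfolding star_def by (simp add: card_filter_sum)
    also have "\<dots> = (\<Sum>k<K. \<Sum>j<F. if P j k = None then 1 else (0::nat))"
      by (rule sum.swap)
    also have "\<dots> = (\<Sum>k<K. card {j. j < F \<and> P j k = None})"
      by (simp add: card_filter_sum)
    also have "\<dots> = (\<Sum>k<K. Z)" using colZ by simp
    finally show ?thesis by simp
  qed
  have eq: "card (star j) = t" if "j < F" for j
  proof -
    have "(\<Sum>j<F. card (star j) - t) = (\<Sum>j<F. card (star j)) - (\<Sum>j<F. t)"
      by (rule sum_subtractf_nat) (use ge in auto)
    also have "\<dots> = 0" using sumstar tF by (simp add: mult.commute)
    finally have "\<forall>j\<in>{..<F}. card (star j) - t = 0" by simp
    then have "card (star j) - t = 0" using that by blast
    then show ?thesis using ge[OF that] by linarith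
  qed
  have exch: "\<exists>j'<F. star j' = insert k (star j - {k'})"
    if j: "j < F" and k: "k < K" "k \<notin> star j" and k': "k' \<in> star j" for j k k'
  proof -
    obtain s where js: "P j k = Some s" using k by (auto simp: star_def)
    let ?C = "snd ` Occ s"
    have fC: "finite ?C" using Ofin by simp
    from key[OF j k(1) js] have c1: "card ?C = t + 1" "k \<in> ?C" "?C - {k} \<subseteq> star j" by auto
    have "card (?C - {k}) = t" using c1 fC by simp
    then have sj: "star j = ?C - {k}"
      using card_subset_eq[OF star_fin c1(3)] eq[OF j] by simp
    then have "k' \<in> ?C" using k' by auto
    then obtain j' where j': "(j', k') \<in> Occ s" by force
    then have j'F: "j' < F" "k' < K" "P j' k' = Some s" by (auto simp: Occ_def)
    from key[OF j'F] have "?C - {k'} \<subseteq> star j'" by auto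
    moreover have "card (?C - {k'}) = t" using c1 fC \<open>k' \<in> ?C\<close> by simp
    ultimately have "star j' = ?C - {k'}"
      using card_subset_eq[OF star_fin] eq[OF j'F(1)] by metis
    moreover have "k \<noteq> k'" using k k' by auto
    ultimately have "star j' = insert k (star j - {k'})" using sj c1(2) by auto
    then show ?thesis using j'F by blast
  qed
  have real: "\<exists>j'<F. star j' = B" if B: "B \<subseteq> {..<K}" "card B = t" for B
  proof -
    have fB: "finite B" using B finite_subset by blast
    have "\<forall>j. j < F \<longrightarrow> card (B - star j) = n \<longrightarrow> (\<exists>j'<F. star j' = B)" for n
    proof (induction n)
      case 0
      show ?case
      proof (intro allI impI)
        fix j assume j: "j < F" "card (B - star j) = 0"
        then have "B \<subseteq> star j" using fB by auto
        then have "B = star j" using card_subset_eq[OF star_fin] eq[OF j(1)] B by metis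
        then show "\<exists>j'<F. star j' = B" using j by auto
      qed
    next
      case (Suc n)
      show ?case
      proof (intro allI impI)
        fix j assume j: "j < F" "card (B - star j) = Suc n"
        then obtain k where kk: "k \<in> B" "k \<notin> star j" by (metis Diff_iff card_0_eq fB finite_Diff nat.simps(3) ex_in_conv)
        have "\<not> star j \<subseteq> B"
        proof
          assume "star j \<subseteq> B"
          then have "star j = B" using card_subset_eq[OF fB] eq[OF j(1)] B by metis
          then show False using kk by auto
        qed
        then obtain k' where kk': "k' \<in> star j" "k' \<notin> B" by auto
        have "k < K" using kk B by auto
        from exch[OF j(1) this kk(2) kk'(1)] obtain j' where
          j': "j' < F" "star j' = insert k (star j - {k'})" by auto
        have "B - star j' = (B - star j) - {k}" using j'(2) kk' by auto
        then have "card (B - star j') = n" using j(2) kk fB by simp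
        then show "\<exists>j'<F. star j' = B" using Suc.IH j'(1) by blast
      qed
    qed
    then show ?thesis using Fpos by blast
  qed
  have "{B. B \<subseteq> {..<K} \<and> card B = t} \<subseteq> star ` {..<F}" using real by blast
  then have "card {B. B \<subseteq> {..<K} \<and> card B = t} \<le> card (star ` {..<F})"
    by (rule card_mono[rotated]) simp
  also have "\<dots> \<le> F" using card_image_le[of "{..<F}" star] by simp
  finally show ?thesis using n_subsets[of "{..<K}" t] tdiv by simp
qed

end
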